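(* Let $n\ge 1$ and $\ell\ge 0$ be integers. Let $\mathbf{M}_0,\mathbf{M}_1,\ldots,\mathbf{M}_\ell$ be $n\times n$ matrices with entries in $\{0,1\}$, let $\pi_{0,0}=1$, and let $\pi_{1,0},\ldots,\pi_{\ell,0}$ be real numbers with $0<\pi_{k,0}\le 1$ for $1\le k\le \ell$. Define $n\times n$ matrices $\mathbf{Q}_0,\ldots,\mathbf{Q}_\ell$ recursively by $$\mathbf{Q}_0=\mathbf{M}_0,\qquad \mathbf{Q}_k=\mathbf{Q}_{k-1}+\pi_{k,0}\big((\mathbf{J}^{(n)}-\mathbf{Q}_{k-1})\circ \mathbf{M}_k\big)\quad (k=1,\ldots,\ell),$$ where $\mathbf{J}^{(n)}$ is the $n\times n$ all-ones matrix and $\circ$ denotes the Hadamard (entrywise) product. Then for all $1\le i,j\le n$: (a) $0\le \mathbf{Q}_k(i,j)\le 1$ for all $0\le k\le \ell$; (b) $\mathbf{Q}_k(i,j)\ge \mathbf{Q}_{k-1}(i,j)$ for all $1\le k\le \ell$; (c) $\mathbf{Q}_\ell(i,j)=0$ if and only if $\mathbf{M}_k(i,j)=0$ for all $0\le k\le \ell$; (d) $\mathbf{Q}_\ell(i,j)=1$ if and only if there exists $k$ with $0\le k\le \ell$ such that $\mathbf{M}_k(i,j)=1$ and $\pi_{k,0}=1$; in particular, if $\mathbf{M}_0(i,j)=1$ then $\mathbf{Q}_\ell(i,j)=1$.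
   Context: Interpretation (not needed for the statement): there are $n$ users of a social network and skills $s_0,\ldots,s_\ell$, with $s_0$ the main skill; $\mathbf{M}_k$ is the adjacency matrix of the endorsement digraph for skill $s_k$ ($\mathbf{M}_k(i,j)=1$ iff user $i$ endorses user $j$ for $s_k$), and $\pi_{k,0}$ is the probability that a person skilled in $s_k$ also possesses $s_0$ (entries of the skill deduction matrix, with $\pi_{k,k}=1$). The skills $s_1,\ldots,s_\ell$ are exactly those other skills with $\pi_{k,0}>0$. $\mathbf{Q}_\ell$ is the weighted endorsement matrix for $s_0$ after endorsement deduction. *)

theory Defs
  imports Complex_Main
begin

text \<open>An n x n real matrix is represented as a function nat => nat => real, of which
only the entries (i,j) with 1 <= i,j <= n are relevant. The family M_0,...,M_l is
represented as M :: nat => nat => nat => real with M k i j = M_k(i,j), and the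
probabilities pi_{k,0} as p :: nat => real.\<close>

definition all_ones :: "nat \<Rightarrow> nat \<Rightarrow> real" where
  "all_ones = (\<lambda>i j. 1)"

definition hadamard :: "(nat \<Rightarrow> nat \<Rightarrow> real) \<Rightarrow> (nat \<Rightarrow> nat \<Rightarrow> real) \<Rightarrow> (nat \<Rightarrow> nat \<Rightarrow> real)" where
  "hadamard A B = (\<lambda>i j. A i j * B i j)"

primrec deduced_endorsement ::
  "(nat \<Rightarrow> nat \<Rightarrow> nat \<Rightarrow> real) \<Rightarrow> (nat \<Rightarrow> real) \<Rightarrow> nat \<Rightarrow> nat \<Rightarrow> nat \<Rightarrow> real" where
  "deduced_endorsement M p 0 = M 0"
| "deduced_endorsement M p (Suc k) =
     (\<lambda>i j. deduced_endorsement M p k i j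
        + p (Suc k) * hadamard (\<lambda>a b. all_ones a b - deduced_endorsement M p k a b) (M (Suc k)) i j)"

end

theory Submission
  imports Defs
begin

lemma D_prod:
  "1 - deduced_endorsement M p k i j = (\<Prod>t\<le>k. 1 - p t * M t i j)" if "p 0 = 1"
proof (induction k)
  case 0 then show ?case using that by simp
next
  case (Suc k)
  have "1 - deduced_endorsement M p (Suc k) i j
        = (1 - deduced_endorsement M p k i j) * (1 - p (Suc k) * M (Suc k) i j)"
    by (simp add: hadamard_def all_ones_def algebra_simps)
  then show ?case using Suc by simp
qed

lemma mult01_eq1: "0 \<le> (a::real) \<Longrightarrow> a \<le> 1 \<Longrightarrow> 0 \<le> b \<Longrightarrow> b \<le> 1 \<Longrightarrow> a * b = 1 \<Longrightarrow> a = 1 \<and> b = 1"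
proof -
  assume h: "0 \<le> a" "a \<le> 1" "0 \<le> b" "b \<le> 1" "a * b = 1"
  have "a * b \<le> a" using h mult_left_le by blast
  moreover have "a * b \<le> b" using h mult_left_le_one_le by blast
  ultimately show ?thesis using h by linarith
qed

theorem proposition1:
  fixes n l :: nat
    and M :: "nat \<Rightarrow> nat \<Rightarrow> nat \<Rightarrow> real"
    and p :: "nat \<Rightarrow> real"
  assumes "n \<ge> 1"
    and M01: "\<And>k i j. k \<le> l \<Longrightarrow> i \<in> {1..n} \<Longrightarrow> j \<in> {1..n} \<Longrightarrow> M k i j \<in> {0, 1}"
    and p0: "p 0 = 1"
    and pk: "\<And>k. 1 \<le> k \<Longrightarrow> k \<le> l \<Longrightarrow> 0 < p k \<and> p k \<le> 1"
  shows "\<forall>i \<in> {1..n}. \<forall>j \<in> {1..n}.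
      (\<forall>k \<le> l. 0 \<le> deduced_endorsement M p k i j \<and> deduced_endorsement M p k i j \<le> 1)
    \<and> (\<forall>k. 1 \<le> k \<and> k \<le> l \<longrightarrow> deduced_endorsement M p k i j \<ge> deduced_endorsement M p (k - 1) i j)
    \<and> (deduced_endorsement M p l i j = 0 \<longleftrightarrow> (\<forall>k \<le> l. M k i j = 0))
    \<and> (deduced_endorsement M p l i j = 1 \<longleftrightarrow> (\<exists>k \<le> l. M k i j = 1 \<and> p k = 1))
    \<and> (M 0 i j = 1 \<longrightarrow> deduced_endorsement M p l i j = 1)"
proof (intro ballI)
  fix i j assume i: "i \<in> {1..n}" and j: "j \<in> {1..n}"
  define f where "f t = 1 - p t * M t i j" for t
  define Q where "Q k = deduced_endorsement M p k i j" for k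
  have QD: "Q k = 1 - (\<Prod>t\<le>k. f t)" for k
    using D_prod[where p=p and M=M and k=k and i=i and j=j, OF p0] unfolding Q_def f_def by linarith
  have pp: "t \<le> l \<Longrightarrow> 0 < p t \<and> p t \<le> 1" for t
    using pk[of t] p0 by (cases "t = 0") auto
  have Mv: "t \<le> l \<Longrightarrow> M t i j = 0 \<or> M t i j = 1" for t using M01[OF _ i j] by auto
  have f01: "t \<le> l \<Longrightarrow> 0 \<le> f t \<and> f t \<le> 1" for t
    using pp[of t] Mv[of t] unfolding f_def by auto
  have f0: "t \<le> l \<Longrightarrow> f t = 0 \<longleftrightarrow> M t i j = 1 \<and> p t = 1" for t
    using pp[of t] Mv[of t] unfolding f_def by auto
  have f1: "t \<le> l \<Longrightarrow> f t = 1 \<longleftrightarrow> M t i j = 0" for t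
    using pp[of t] Mv[of t] unfolding f_def by auto
  have P01: "k \<le> l \<Longrightarrow> 0 \<le> (\<Prod>t\<le>k. f t) \<and> (\<Prod>t\<le>k. f t) \<le> 1" for k
    using f01 by (auto intro!: prod_nonneg prod_le_1)
  have Pz: "k \<le> l \<Longrightarrow> (\<Prod>t\<le>k. f t) = 0 \<longleftrightarrow> (\<exists>t\<le>k. f t = 0)" for k
    by (simp add: atMost_iff Bex_def)
  have P1: "k \<le> l \<Longrightarrow> (\<Prod>t\<le>k. f t) = 1 \<longleftrightarrow> (\<forall>t\<le>k. f t = 1)" for k
  proof (induction k)
    case 0 then show ?case by simp
  next
    case (Suc k)
    have "(\<Prod>t\<le>Suc k. f t) = (\<Prod>t\<le>k. f t) * f (Suc k)" by simp
    have kl: "k \<le> l" using Suc.prems by simp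
    show ?case
    proof
      assume h: "(\<Prod>t\<le>Suc k. f t) = 1"
      have "(\<Prod>t\<le>k. f t) = 1 \<and> f (Suc k) = 1"
        using mult01_eq1[of "\<Prod>t\<le>k. f t" "f (Suc k)"] P01[OF kl] f01[OF Suc.prems] h
        by (simp del: prod.atMost_Suc add: \<open>(\<Prod>t\<le>Suc k. f t) = (\<Prod>t\<le>k. f t) * f (Suc k)\<close>[symmetric])
      then show "\<forall>t\<le>Suc k. f t = 1" using Suc.IH[OF kl] le_Suc_eq by blast
    next
      assume h: "\<forall>t\<le>Suc k. f t = 1"
      then have "(\<Prod>t\<le>k. f t) = 1" using Suc.IH[OF kl] by simp
      then show "(\<Prod>t\<le>Suc k. f t) = 1" using h by simp
    qed
  qed
  have A: "\<forall>k \<le> l. 0 \<le> Q k \<and> Q k \<le> 1" using P01 QD by auto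
  have B: "\<forall>k. 1 \<le> k \<and> k \<le> l \<longrightarrow> Q k \<ge> Q (k - 1)"
  proof (intro allI impI)
    fix k assume k: "1 \<le> k \<and> k \<le> l"
    then obtain m where m: "k = Suc m" by (cases k) auto
    have "(\<Prod>t\<le>k. f t) = (\<Prod>t\<le>m. f t) * f k" using m by simp
    also have "\<dots> \<le> (\<Prod>t\<le>m. f t)" using P01[of m] f01[of k] k m
      by (simp add: mult_left_le)
    finally show "Q k \<ge> Q (k - 1)" using QD m by simp
  qed
  have C: "Q l = 0 \<longleftrightarrow> (\<forall>k \<le> l. M k i j = 0)"
    using P1[of l] f1 QD by auto
  have D: "Q l = 1 \<longleftrightarrow> (\<exists>k \<le> l. M k i j = 1 \<and> p k = 1)"
    using Pz[of l] f0 QD by auto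
  have E: "M 0 i j = 1 \<longrightarrow> Q l = 1" using D p0 by auto
  show "(\<forall>k \<le> l. 0 \<le> deduced_endorsement M p k i j \<and> deduced_endorsement M p k i j \<le> 1)
    \<and> (\<forall>k. 1 \<le> k \<and> k \<le> l \<longrightarrow> deduced_endorsement M p k i j \<ge> deduced_endorsement M p (k - 1) i j)
    \<and> (deduced_endorsement M p l i j = 0 \<longleftrightarrow> (\<forall>k \<le> l. M k i j = 0))
    \<and> (deduced_endorsement M p l i j = 1 \<longleftrightarrow> (\<exists>k \<le> l. M k i j = 1 \<and> p k = 1))
    \<and> (M 0 i j = 1 \<longrightarrow> deduced_endorsement M p l i j = 1)"
    using A B C D E unfolding Q_def by blast
qed

end
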